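(* Let $d$ be a positive integer and let $z_j\in\mathbb{C}$ be given for each $j\in[d]$ relatively prime to $d$. Suppose that for every $m\le 6$ and every $m$-tuple $(j_1,\dots,j_m)$ of elements of $[d]$ relatively prime to $d$ satisfying $j_1+\cdots+j_m\equiv 0\pmod d$, we have $z_{j_1}+\cdots+z_{j_m}\in\mathbb{Z}$. Then there exists an integer $c$ such that $z_j-\frac{cj}{d}\in\mathbb{Z}$ for all $j\in[d]$ relatively prime to $d$.
   Context: $[d]=\{1,\dots,d\}$; tuples may contain repeated entries, and $m\ge1$. *)

theory Defs
  imports "HOL-Analysis.Analysis"
begin

end

theory Submission imports Defs "HOL-Computational_Algebra.Primes" begin
lemma ex_aux:
  fixes x :: int
  assumes "finite P" "\<forall>p\<in>P. prime p" "even x"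
  shows "\<exists>c::int. \<forall>p\<in>P. \<not> p dvd c \<and> \<not> p dvd (c + x)"
  using assms
proof (induction P rule: finite_induct)
  case empty
  then show ?case by auto
next
  case (insert p P)
  then obtain c0 where c0: "\<forall>q\<in>P. \<not> q dvd c0 \<and> \<not> q dvd (c0 + x)" by auto
  define m where "m = (\<Prod>P)"
  have pp: "prime p" using insert by auto
  have npm: "\<not> p dvd m"
  proof
    assume "p dvd m"
    then obtain q where q: "q \<in> P" "p dvd q" using prime_dvd_prod_iff[OF insert(1) pp] m_def by auto
    then have "prime q" using insert by auto
    then have "p = q" using q pp by (simp add: primes_dvd_imp_eq)
    then show False using q insert(2) by auto
  qed
  have qm: "q dvd m" if "q \<in> P" for q using dvd_prodI[OF insert(1) that, of "\<lambda>x. x"] m_def by simp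
  have good: "\<forall>q\<in>P. \<not> q dvd (c0 + m * s) \<and> \<not> q dvd (c0 + m * s + x)" for s
  proof
    fix q assume q: "q \<in> P"
    have "q dvd m * s" using qm[OF q] by simp
    then show "\<not> q dvd (c0 + m * s) \<and> \<not> q dvd (c0 + m * s + x)"
      using c0 q by (metis add.commute add.left_commute dvd_add_right_iff)
  qed
  show ?case
  proof (cases "p = 2")
    case True
    have om: "odd m" using npm True by simp
    obtain s where s: "odd (c0 + m * s)"
      using om by (metis add.commute even_add mult.comm_neutral odd_one mult_zero_right add_0)
    have "\<not> p dvd (c0 + m * s) \<and> \<not> p dvd (c0 + m * s + x)" using s True insert(5) by auto
    then show ?thesis using good by blast
  next
    case False
    have n2: "\<not> p dvd 2"
    proof
      assume "p dvd 2"
      then have "p \<le> 2" by (simp add: zdvd_imp_le)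
      moreover have "p \<ge> 2" using pp prime_ge_2_int by auto
      ultimately show False using False by auto
    qed
    have n2m: "\<not> p dvd 2 * m" using n2 npm pp by (simp add: prime_dvd_mult_iff)
    define bad where "bad = (\<lambda>y. p dvd y \<or> p dvd (y + x))"
    have "\<exists>s. \<not> bad (c0 + m * s)"
    proof (rule ccontr)
      assume H: "\<not> (\<exists>s. \<not> bad (c0 + m * s))"
      have b0: "p dvd c0 \<or> p dvd c0 + x" using H[unfolded bad_def] by (metis mult_zero_right add_0_right)
      have b1: "p dvd c0 + m \<or> p dvd c0 + m + x" using H[unfolded bad_def] by (metis mult_1_right)
      have b2: "p dvd c0 + m * 2 \<or> p dvd c0 + m * 2 + x" using H[unfolded bad_def] by blast
      have dd: "p dvd b - a" if "p dvd a" "p dvd b" for a b using that by (simp add: dvd_diff)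
      show False
        using b0 b1 b2 dd[of c0 "c0+m"] dd[of c0 "c0+m*2"] dd[of "c0+m" "c0+m*2"]
          dd[of "c0+x" "c0+m+x"] dd[of "c0+x" "c0+m*2+x"] dd[of "c0+m+x" "c0+m*2+x"]
          npm n2m by (auto simp: algebra_simps)
    qed
    then obtain s where "\<not> bad (c0 + m * s)" by blast
    then show ?thesis using good unfolding bad_def by (metis insert_iff)
  qed
qed

lemma ex_unit:
  fixes x n :: int
  assumes "n \<noteq> 0" "even x"
  shows "\<exists>c. coprime c n \<and> coprime (c + x) n"
proof -
  obtain c where c: "\<forall>p\<in>prime_factors n. \<not> p dvd c \<and> \<not> p dvd (c + x)"
    using ex_aux[of "prime_factors n" x] assms by auto
  have cop: "coprime y n" if "\<forall>p\<in>prime_factors n. \<not> p dvd y" for y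
  proof (rule ccontr)
    assume "\<not> coprime y n"
    then have "\<not> is_unit (gcd y n)" by (simp add: coprime_iff_gcd_eq_1)
    moreover have "gcd y n \<noteq> 0" using assms by simp
    ultimately obtain p where "prime p" "p dvd gcd y n" using prime_divisor_exists by blast
    then show False using that assms by (auto simp: in_prime_factors_iff)
  qed
  show ?thesis using c cop by blast
qed
lemma relR:
  fixes d :: nat and z :: "nat \<Rightarrow> complex" and xs :: "int list"
  assumes d2: "d \<ge> 2"
    and H: "\<And>(m::nat) (j::nat \<Rightarrow> nat). 1 \<le> m \<Longrightarrow> m \<le> 6 \<Longrightarrow>
           (\<forall>i<m. j i \<in> {1..d} \<and> coprime (j i) d) \<Longrightarrow>
           d dvd (\<Sum>i<m. j i) \<Longrightarrow>
           (\<Sum>i<m. z (j i)) \<in> \<int>"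
    and l: "1 \<le> length xs" "length xs \<le> 6"
    and u: "\<forall>x\<in>set xs. coprime x (int d)"
    and dv: "int d dvd sum_list xs"
  shows "sum_list (map (\<lambda>x. z (nat (x mod int d))) xs) \<in> \<int>"
proof -
  define D where "D = int d"
  have D2: "D \<ge> 2" using d2 D_def by simp
  define j where "j = (\<lambda>i. nat (xs!i mod D))"
  have jp: "j i \<in> {1..d} \<and> coprime (j i) d" if "i < length xs" for i
  proof -
    have c: "coprime (xs!i) D" using u that D_def by auto
    have ne: "xs!i mod D \<noteq> 0"
    proof
      assume "xs!i mod D = 0"
      then have "D dvd xs!i" by auto
      then have "is_unit D" using c coprime_common_divisor[of "xs!i" D D] by simp
      then show False using D2 by auto
    qed
    have r: "0 \<le> xs!i mod D" "xs!i mod D < D" using D2 by auto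
    have "coprime (xs!i mod D) D" using c D2 by (simp add: coprime_mod_left_iff)
    then have "coprime (int (j i)) (int d)" using r j_def D_def by simp
    then have "coprime (j i) d" by (simp only: coprime_int_iff)
    moreover have "j i \<in> {1..d}" using ne r j_def D_def by auto
    ultimately show ?thesis by simp
  qed
  have "int (\<Sum>i<length xs. j i) = (\<Sum>i<length xs. xs!i mod D)"
    using D2 by (simp add: j_def)
  moreover have "(\<Sum>i<length xs. xs!i mod D) mod D = (\<Sum>i<length xs. xs!i) mod D"
    by (rule mod_sum_eq)
  moreover have "(\<Sum>i<length xs. xs!i) = sum_list xs"
    by (simp add: sum_list_sum_nth atLeast0LessThan)
  ultimately have "D dvd int (\<Sum>i<length xs. j i)" using dv D_def
    by (metis dvd_eq_mod_eq_0)
  then have "d dvd (\<Sum>i<length xs. j i)" by (metis D_def of_nat_dvd_iff)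
  then have "(\<Sum>i<length xs. z (j i)) \<in> \<int>" using H l jp by blast
  moreover have "sum_list (map (\<lambda>x. z (nat (x mod int d))) xs) = (\<Sum>i<length xs. z (j i))"
    by (simp add: sum_list_sum_nth atLeast0LessThan j_def D_def)
  ultimately show ?thesis by simp
qed

theorem lemma3p8:
  fixes d :: nat and z :: "nat \<Rightarrow> complex"
  assumes "d > 0"
    and "\<And>(m::nat) (j::nat \<Rightarrow> nat). 1 \<le> m \<Longrightarrow> m \<le> 6 \<Longrightarrow>
           (\<forall>i<m. j i \<in> {1..d} \<and> coprime (j i) d) \<Longrightarrow>
           d dvd (\<Sum>i<m. j i) \<Longrightarrow>
           (\<Sum>i<m. z (j i)) \<in> \<int>"
  shows "\<exists>c::int. \<forall>j\<in>{1..d}. coprime j d \<longrightarrow>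
           z j - of_int c * of_nat j / of_nat d \<in> \<int>"
proof (cases "d = 1")
  case True
  have "(\<Sum>i<(1::nat). z ((\<lambda>_. 1) i)) \<in> \<int>" by (rule assms(2)[of 1 "\<lambda>_. 1"]) (use True in auto)
  moreover have "(\<Sum>i<(1::nat). z ((\<lambda>_. 1) i)) = z 1"
    by (simp only: One_nat_def sum.lessThan_Suc lessThan_0 sum.empty) simp
  ultimately have "z 1 \<in> \<int>" by simp
  then show ?thesis using True by (intro exI[of _ 0]) auto
next
  case False
  then have d2: "d \<ge> 2" using assms(1) by simp
  define D where "D = int d"
  have D2: "D \<ge> 2" using d2 D_def by simp
  define u where "u = (\<lambda>x::int. z (nat (x mod D)))"
  note R = relR[where d=d and z=z, OF d2 assms(2), folded D_def, folded u_def]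
  define t where "t = u 1"
  have u1: "coprime (1::int) D" "coprime (-1::int) D" by auto
  have neg: "u a + u (-a) \<in> \<int>" if "coprime a D" for a
  proof -
    have "sum_list (map u [a, -a]) \<in> \<int>"
      by (rule R) (use that in auto)
    then show ?thesis by simp
  qed
  have Q: "\<forall>a b. coprime a D \<longrightarrow> coprime b D \<longrightarrow> D dvd (a - b) - 2 * int k \<longrightarrow>
      u a - u b - 2 * of_nat k * t \<in> \<int>" for k
  proof (induction k)
    case 0
    show ?case
    proof (intro allI impI)
      fix a b assume "D dvd (a - b) - 2 * int 0"
      then have "a mod D = b mod D" by (simp add: algebra_simps mod_eq_dvd_iff)
      then show "u a - u b - 2 * of_nat 0 * t \<in> \<int>" by (simp add: u_def)
    qed
  next
    case (Suc k)
    show ?case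
    proof (intro allI impI)
      fix a b assume a: "coprime a D" and b: "coprime b D" and ab: "D dvd (a - b) - 2 * int (Suc k)"
      obtain c where c: "coprime c D" "coprime (c + 2 * int k) D"
        using ex_unit[of D "2 * int k"] D2 by auto
      have IH: "u (c + 2 * int k) - u c - 2 * of_nat k * t \<in> \<int>" 
        using Suc.IH[rule_format, OF c(2) c(1)] by simp
      have "D dvd (a - b) - 2 * int (Suc k)" using ab by (simp add: algebra_simps)
      then have dv6: "D dvd sum_list [a, -b, -(c + 2 * int k), c, -1, -1]" by (simp add: algebra_simps)
      have cn: "coprime (- c - 2 * int k) D" using c(2) coprime_minus_left_iff[of "c + 2 * int k" D]
        by (simp add: algebra_simps)
      have "sum_list (map u [a, -b, -(c + 2 * int k), c, -1, -1]) \<in> \<int>"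
        by (rule R) (use a b c cn dv6 in auto)
      then have r: "u a + u (-b) + u (-(c + 2 * int k)) + u c + u (-1) + u (-1) \<in> \<int>"
        by (simp add: add.assoc)
      have n1: "u b + u (-b) \<in> \<int>" using neg b by blast
      have n2: "u (c + 2 * int k) + u (-(c + 2 * int k)) \<in> \<int>" using neg c by blast
      have n3: "t + u (-1) \<in> \<int>" using neg[OF u1(1)] t_def by simp
      have "u a - u b - 2 * of_nat (Suc k) * t =
        (u a + u (-b) + u (-(c + 2 * int k)) + u c + u (-1) + u (-1))
        - (u b + u (-b)) - (u (c + 2 * int k) + u (-(c + 2 * int k)))
        - 2 * (t + u (-1)) + (u (c + 2 * int k) - u c - 2 * of_nat k * t)"
        by (simp add: algebra_simps)
      also have "\<dots> \<in> \<int>" by (rule Ints_add[OF Ints_diff[OF Ints_diff[OF Ints_diff[OF r n1] n2] Ints_mult[OF Ints_numeral n3]] IH])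
      finally show "u a - u b - 2 * of_nat (Suc k) * t \<in> \<int>" .
    qed
  qed
  have Dt: "of_int D * t \<in> \<int>"
  proof (cases "even D")
    case True
    then obtain k where k: "D = 2 * k" by blast
    have "k \<ge> 0" using k D2 by simp
    then have "D dvd (1 - 1) - 2 * int (nat k)" using k by (simp add: algebra_simps)
    then have "u 1 - u 1 - 2 * of_nat (nat k) * t \<in> \<int>" using Q[rule_format, OF u1(1) u1(1)] by blast
    then have "- (of_int (2 * k) * t) \<in> \<int>" using \<open>k \<ge> 0\<close> by (simp add: of_nat_nat)
    then have "- (- (of_int (2 * k) * t)) \<in> \<int>" by (rule Ints_minus)
    then show ?thesis using k by simp
  next
    case False
    then have "coprime 2 D" by (simp add: coprime_commute)
    then have c2: "coprime (-2) D" by simp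
    have dv3: "D dvd sum_list [1, 1, -2]" by simp
    have "sum_list (map u [1, 1, -2]) \<in> \<int>"
      by (rule R) (use c2 dv3 in auto)
    then have r: "u 1 + u 1 + u (-2) \<in> \<int>" by (simp add: add.assoc)
    have n: "u 2 + u (-2) \<in> \<int>" using neg[of 2] \<open>coprime 2 D\<close> by simp
    have "even (D + 1)" using False by simp
    then obtain k where k: "D + 1 = 2 * k" by (rule evenE)
    have "k \<ge> 0" using k D2 by simp
    have "(2 - 1) - 2 * int (nat k) = - D" using k \<open>k \<ge> 0\<close> by simp
    then have "D dvd (2 - 1) - 2 * int (nat k)" by simp
    then have q: "u 2 - u 1 - 2 * of_nat (nat k) * t \<in> \<int>" using Q[rule_format, OF \<open>coprime 2 D\<close> u1(1)] by blast
    have "(of_int (D + 1) :: complex) = of_int (2 * int (nat k))" using k \<open>k \<ge> 0\<close> by simp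
    then have e: "2 * of_nat (nat k) = of_int D + (1::complex)" by simp
    have "(u 1 + u 1 + u (-2)) - (u 2 + u (-2)) + (u 2 - u 1 - 2 * of_nat (nat k) * t)
        = u 1 - 2 * of_nat (nat k) * t" by (simp add: algebra_simps)
    also have "\<dots> = u 1 - (of_int D + 1) * t" by (simp only: e)
    also have "\<dots> = - (of_int D * t)" by (simp add: t_def algebra_simps)
    finally have "- (of_int D * t) = (u 1 + u 1 + u (-2)) - (u 2 + u (-2)) + (u 2 - u 1 - 2 * of_nat (nat k) * t)" by simp
    also have "\<dots> \<in> \<int>" by (rule Ints_add[OF Ints_diff[OF r n] q])
    finally have "- (- (of_int D * t)) \<in> \<int>" by (rule Ints_minus)
    then show ?thesis by simp
  qed
  then obtain c where c: "of_int D * t = of_int c" by (auto elim: Ints_cases)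
  show ?thesis
  proof (intro exI[of _ c] ballI impI)
    fix j assume j: "j \<in> {1..d}" "coprime j d"
    have jd: "j < d"
    proof (rule ccontr)
      assume "\<not> j < d"
      then have "j = d" using j by auto
      then show False using j d2 by auto
    qed
    define a where "a = int j"
    have a: "coprime a D" using j a_def D_def by (simp add: coprime_int_iff)
    have a1: "a \<ge> 1" using j a_def by simp
    have ua: "u a = z j" using jd a_def D_def u_def by simp
    have tt: "of_int c * of_nat j / of_nat d = of_int a * t"
      using c D2 a_def D_def by (simp add: field_simps)
    have "u a - of_int a * t \<in> \<int>"
    proof (cases "even a")
      case True
      have "odd D"
      proof
        assume "even D"
        then have "is_unit (2::int)" using True a coprime_common_divisor[of a D 2] by simp
        then show False by simp
      qed
      then have "even (a - 1 + D)" using True by simp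
      then obtain k where k: "a - 1 + D = 2 * k" by (rule evenE)
      have "k \<ge> 0" using k a1 D2 by simp
      have "(a - 1) - 2 * int (nat k) = - D" using k \<open>k \<ge> 0\<close> by simp
      then have "D dvd (a - 1) - 2 * int (nat k)" by simp
      then have q: "u a - u 1 - 2 * of_nat (nat k) * t \<in> \<int>" using Q[rule_format, OF a u1(1)] by blast
      have "(of_int (a - 1 + D) :: complex) = of_int (2 * int (nat k))" using k \<open>k \<ge> 0\<close> by simp
      then have e: "2 * of_nat (nat k) = of_int a - 1 + (of_int D :: complex)" by simp
      have "(u a - u 1 - 2 * of_nat (nat k) * t) + of_int D * t = u a - u 1 - (of_int a - 1 + of_int D) * t + of_int D * t"
        by (simp only: e)
      also have "\<dots> = u a - of_int a * t" by (simp add: t_def algebra_simps)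
      finally have "u a - of_int a * t = (u a - u 1 - 2 * of_nat (nat k) * t) + of_int D * t" by simp
      also have "\<dots> \<in> \<int>" by (rule Ints_add[OF q Dt])
      finally show ?thesis .
    next
      case False
      then have "even (a - 1)" by simp
      then obtain k where k: "a - 1 = 2 * k" by (rule evenE)
      have "k \<ge> 0" using k a1 by simp
      have "(a - 1) - 2 * int (nat k) = 0" using k \<open>k \<ge> 0\<close> by simp
      then have "D dvd (a - 1) - 2 * int (nat k)" by simp
      then have q: "u a - u 1 - 2 * of_nat (nat k) * t \<in> \<int>" using Q[rule_format, OF a u1(1)] by blast
      have "(of_int (a - 1) :: complex) = of_int (2 * int (nat k))" using k \<open>k \<ge> 0\<close> by simp
      then have e: "2 * of_nat (nat k) = of_int a - (1 :: complex)" by simp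
      have "u a - u 1 - 2 * of_nat (nat k) * t = u a - u 1 - (of_int a - 1) * t"
        by (simp only: e)
      also have "\<dots> = u a - of_int a * t" by (simp add: t_def algebra_simps)
      finally have "u a - u 1 - 2 * of_nat (nat k) * t = u a - of_int a * t" .
      then show ?thesis using q by (simp only:)
    qed
    then show "z j - of_int c * of_nat j / of_nat d \<in> \<int>" using ua tt by simp
  qed
qed

end
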